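(* There is an absolute constant $C$ such that the following holds. Let $G=(V,E)$ be an $m_\ell \times m_s$ grid graph ($m_\ell\ge m_s$, $m_\ell \ge 3$, $m_s\ge 2$) with every vertex occupied by a robot, and let $E' \subseteq E$ be any set of pairwise vertex-disjoint edges. Then there is a sequence of at most $C$ valid synchronous moves after which, for every edge $(v_1,v_2)\in E'$, the robot initially at $v_1$ is at $v_2$ and the robot initially at $v_2$ is at $v_1$, while every robot initially at a vertex not covered by $E'$ is back at its initial vertex. (This operation is denoted $\textsc{flip}(E')$.)
   Context: The $m_\ell \times m_s$ grid graph has vertex set $\{1,\dots,m_\ell\}\times\{1,\dots,m_s\}$ with edges between vertices at $\ell_1$-distance 1. Valid synchronous moves: from step $t$ to $t+1$ each robot either stays put or moves to an adjacent vertex, subject to (i) no two robots occupying the same vertex afterwards and (ii) no two robots traversing the same edge in opposite directions. *)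

theory Defs
  imports Main
begin

type_synonym vertex = "nat \<times> nat"

definition grid_V :: "nat \<Rightarrow> nat \<Rightarrow> vertex set" where
  "grid_V ml ms = {1..ml} \<times> {1..ms}"

definition grid_adj :: "nat \<Rightarrow> nat \<Rightarrow> vertex \<Rightarrow> vertex \<Rightarrow> bool" where
  "grid_adj ml ms u v \<longleftrightarrow> u \<in> grid_V ml ms \<and> v \<in> grid_V ml ms \<and>
     ((fst u - fst v) + (fst v - fst u) + (snd u - snd v) + (snd v - snd u) = 1)"

definition grid_E :: "nat \<Rightarrow> nat \<Rightarrow> vertex set set" where
  "grid_E ml ms = {{u, v} | u v. grid_adj ml ms u v}"

text \<open>A configuration maps each robot (identified by its initial vertex in grid_V)
  to its current vertex.\<close>
definition valid_move :: "nat \<Rightarrow> nat \<Rightarrow> (vertex \<Rightarrow> vertex) \<Rightarrow> (vertex \<Rightarrow> vertex) \<Rightarrow> bool" where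
  "valid_move ml ms p q \<longleftrightarrow>
     (\<forall>r \<in> grid_V ml ms. q r = p r \<or> grid_adj ml ms (p r) (q r)) \<and>
     inj_on q (grid_V ml ms) \<and>
     (\<forall>r1 \<in> grid_V ml ms. \<forall>r2 \<in> grid_V ml ms. r1 \<noteq> r2 \<longrightarrow>
        \<not> (p r1 \<noteq> q r1 \<and> q r1 = p r2 \<and> q r2 = p r1))"

end

theory Submission imports Defs begin


definition addp :: "nat\<times>nat \<Rightarrow> nat\<times>nat \<Rightarrow> nat\<times>nat" where
  "addp u w = (fst u + fst w, snd u + snd w)"
definition dv :: "nat \<Rightarrow> nat\<times>nat" where "dv d = (if d = 0 then (1,0) else (0,1))"
definition B0 :: "(nat\<times>nat) set" where "B0 = {(0,0),(1,0),(2,0),(0,1),(1,1),(2,1)}"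
definition ladj :: "nat\<times>nat \<Rightarrow> nat\<times>nat \<Rightarrow> bool" where
  "ladj u v \<longleftrightarrow> (fst u - fst v) + (fst v - fst u) + (snd u - snd v) + (snd v - snd u) = 1"

definition g1 :: "nat\<times>nat \<Rightarrow> nat\<times>nat" where
  "g1 v = (if v = (0,0) then (1,0) else if v = (1,0) then (1,1) else if v = (1,1) then (0,1)
     else if v = (0,1) then (0,0) else v)"
definition g2 :: "nat\<times>nat \<Rightarrow> nat\<times>nat" where
  "g2 v = (if v = (1,0) then (0,0) else if v = (1,1) then (1,0) else if v = (0,1) then (1,1)
     else if v = (0,0) then (0,1) else v)"
definition g3 :: "nat\<times>nat \<Rightarrow> nat\<times>nat" where
  "g3 v = (if v = (1,0) then (2,0) else if v = (2,0) then (2,1) else if v = (2,1) then (1,1)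
     else if v = (1,1) then (1,0) else v)"
definition g4 :: "nat\<times>nat \<Rightarrow> nat\<times>nat" where
  "g4 v = (if v = (2,0) then (1,0) else if v = (2,1) then (2,0) else if v = (1,1) then (2,1)
     else if v = (1,0) then (1,1) else v)"
definition g5 :: "nat\<times>nat \<Rightarrow> nat\<times>nat" where
  "g5 v = (if v = (0,0) then (1,0) else if v = (1,0) then (2,0) else if v = (2,0) then (2,1)
     else if v = (2,1) then (1,1) else if v = (1,1) then (0,1) else if v = (0,1) then (0,0) else v)"
definition g6 :: "nat\<times>nat \<Rightarrow> nat\<times>nat" where
  "g6 v = (if v = (1,0) then (0,0) else if v = (2,0) then (1,0) else if v = (2,1) then (2,0)
     else if v = (1,1) then (2,1) else if v = (0,1) then (1,1) else if v = (0,0) then (0,1) else v)"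

definition gen :: "nat \<Rightarrow> nat\<times>nat \<Rightarrow> nat\<times>nat" where
  "gen n = (if n = 1 then g1 else if n = 2 then g2 else if n = 3 then g3 else if n = 4 then g4
     else if n = 5 then g5 else if n = 6 then g6 else id)"

fun cmp :: "(nat \<Rightarrow> 'a \<Rightarrow> 'a) \<Rightarrow> nat \<Rightarrow> 'a \<Rightarrow> 'a" where
  "cmp f 0 = id"
| "cmp f (Suc n) = f n \<circ> cmp f n"

definition wd :: "nat \<Rightarrow> nat list" where
  "wd k = (if k = 0 then [1,3,6] else if k = 1 then [4,2,5] else if k = 2 then [2,4,5]
     else if k = 3 then [3,1,6] else if k = 4 then [1,1,3,6,2] else if k = 5 then [1,6,3]
     else [3,1,6,2,5])"

definition lstep :: "nat \<Rightarrow> nat \<Rightarrow> nat\<times>nat \<Rightarrow> nat\<times>nat" where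
  "lstep k s = gen (if s < length (wd k) then wd k ! s else 0)"

definition ltyp :: "nat \<Rightarrow> nat\<times>nat \<Rightarrow> nat" where
  "ltyp d w = (if d = 0 then fst w + 2 * snd w else 4 + fst w)"

lemma gen_cases: "gen n = g1 \<or> gen n = g2 \<or> gen n = g3 \<or> gen n = g4 \<or> gen n = g5 \<or> gen n = g6 \<or> gen n = id"
  unfolding gen_def by auto

lemma gen_B0: "w \<in> B0 \<Longrightarrow> gen n w \<in> B0"
  using gen_cases[of n] unfolding B0_def
  by (elim disjE) (auto simp: g1_def g2_def g3_def g4_def g5_def g6_def)

lemma gen_adj: "w \<in> B0 \<Longrightarrow> gen n w = w \<or> ladj w (gen n w)"
  using gen_cases[of n] unfolding B0_def
  by (elim disjE) (auto simp: g1_def g2_def g3_def g4_def g5_def g6_def ladj_def)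

lemma gen_inj: "inj_on (gen n) B0"
  using gen_cases[of n] unfolding B0_def inj_on_def
  by (elim disjE) (simp_all add: g1_def g2_def g3_def g4_def g5_def g6_def)

lemma gen_noswap: "w \<in> B0 \<Longrightarrow> gen n w \<noteq> w \<Longrightarrow> gen n (gen n w) \<noteq> w"
  using gen_cases[of n] unfolding B0_def
  by (elim disjE) (auto simp: g1_def g2_def g3_def g4_def g5_def g6_def)

lemma cmp5: "cmp f 5 v = f 4 (f 3 (f 2 (f 1 (f 0 v))))"
  by (simp add: eval_nat_numeral)



lemma lp0_00: "cmp (lstep 0) 5 (0, 0) = (1, 0)"
  by (simp add: cmp5 lstep_def wd_def gen_def g1_def g2_def g3_def g4_def g5_def g6_def)
lemma lp0_01: "cmp (lstep 0) 5 (0, 1) = (0, 1)"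
  by (simp add: cmp5 lstep_def wd_def gen_def g1_def g2_def g3_def g4_def g5_def g6_def)
lemma lp0_10: "cmp (lstep 0) 5 (1, 0) = (0, 0)"
  by (simp add: cmp5 lstep_def wd_def gen_def g1_def g2_def g3_def g4_def g5_def g6_def)
lemma lp0_11: "cmp (lstep 0) 5 (1, 1) = (1, 1)"
  by (simp add: cmp5 lstep_def wd_def gen_def g1_def g2_def g3_def g4_def g5_def g6_def)
lemma lp0_20: "cmp (lstep 0) 5 (2, 0) = (2, 0)"
  by (simp add: cmp5 lstep_def wd_def gen_def g1_def g2_def g3_def g4_def g5_def g6_def)
lemma lp0_21: "cmp (lstep 0) 5 (2, 1) = (2, 1)"
  by (simp add: cmp5 lstep_def wd_def gen_def g1_def g2_def g3_def g4_def g5_def g6_def)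
lemma lw0: "v \<in> B0 \<Longrightarrow> cmp (lstep 0) 5 v = (if v = (0, 0) then (1, 0) else if v = (1, 0) then (0, 0) else v)"
  unfolding B0_def by (elim insertE emptyE; hypsubst; simp only: lp0_00 lp0_01 lp0_10 lp0_11 lp0_20 lp0_21; simp)

lemma lp1_00: "cmp (lstep 1) 5 (0, 0) = (0, 0)"
  by (simp add: cmp5 lstep_def wd_def gen_def g1_def g2_def g3_def g4_def g5_def g6_def)
lemma lp1_01: "cmp (lstep 1) 5 (0, 1) = (0, 1)"
  by (simp add: cmp5 lstep_def wd_def gen_def g1_def g2_def g3_def g4_def g5_def g6_def)
lemma lp1_10: "cmp (lstep 1) 5 (1, 0) = (2, 0)"
  by (simp add: cmp5 lstep_def wd_def gen_def g1_def g2_def g3_def g4_def g5_def g6_def)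
lemma lp1_11: "cmp (lstep 1) 5 (1, 1) = (1, 1)"
  by (simp add: cmp5 lstep_def wd_def gen_def g1_def g2_def g3_def g4_def g5_def g6_def)
lemma lp1_20: "cmp (lstep 1) 5 (2, 0) = (1, 0)"
  by (simp add: cmp5 lstep_def wd_def gen_def g1_def g2_def g3_def g4_def g5_def g6_def)
lemma lp1_21: "cmp (lstep 1) 5 (2, 1) = (2, 1)"
  by (simp add: cmp5 lstep_def wd_def gen_def g1_def g2_def g3_def g4_def g5_def g6_def)
lemma lw1: "v \<in> B0 \<Longrightarrow> cmp (lstep 1) 5 v = (if v = (1, 0) then (2, 0) else if v = (2, 0) then (1, 0) else v)"
  unfolding B0_def by (elim insertE emptyE; hypsubst; simp only: lp1_00 lp1_01 lp1_10 lp1_11 lp1_20 lp1_21; simp)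

lemma lp2_00: "cmp (lstep 2) 5 (0, 0) = (0, 0)"
  by (simp add: cmp5 lstep_def wd_def gen_def g1_def g2_def g3_def g4_def g5_def g6_def)
lemma lp2_01: "cmp (lstep 2) 5 (0, 1) = (1, 1)"
  by (simp add: cmp5 lstep_def wd_def gen_def g1_def g2_def g3_def g4_def g5_def g6_def)
lemma lp2_10: "cmp (lstep 2) 5 (1, 0) = (1, 0)"
  by (simp add: cmp5 lstep_def wd_def gen_def g1_def g2_def g3_def g4_def g5_def g6_def)
lemma lp2_11: "cmp (lstep 2) 5 (1, 1) = (0, 1)"
  by (simp add: cmp5 lstep_def wd_def gen_def g1_def g2_def g3_def g4_def g5_def g6_def)
lemma lp2_20: "cmp (lstep 2) 5 (2, 0) = (2, 0)"
  by (simp add: cmp5 lstep_def wd_def gen_def g1_def g2_def g3_def g4_def g5_def g6_def)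
lemma lp2_21: "cmp (lstep 2) 5 (2, 1) = (2, 1)"
  by (simp add: cmp5 lstep_def wd_def gen_def g1_def g2_def g3_def g4_def g5_def g6_def)
lemma lw2: "v \<in> B0 \<Longrightarrow> cmp (lstep 2) 5 v = (if v = (0, 1) then (1, 1) else if v = (1, 1) then (0, 1) else v)"
  unfolding B0_def by (elim insertE emptyE; hypsubst; simp only: lp2_00 lp2_01 lp2_10 lp2_11 lp2_20 lp2_21; simp)

lemma lp3_00: "cmp (lstep 3) 5 (0, 0) = (0, 0)"
  by (simp add: cmp5 lstep_def wd_def gen_def g1_def g2_def g3_def g4_def g5_def g6_def)
lemma lp3_01: "cmp (lstep 3) 5 (0, 1) = (0, 1)"
  by (simp add: cmp5 lstep_def wd_def gen_def g1_def g2_def g3_def g4_def g5_def g6_def)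
lemma lp3_10: "cmp (lstep 3) 5 (1, 0) = (1, 0)"
  by (simp add: cmp5 lstep_def wd_def gen_def g1_def g2_def g3_def g4_def g5_def g6_def)
lemma lp3_11: "cmp (lstep 3) 5 (1, 1) = (2, 1)"
  by (simp add: cmp5 lstep_def wd_def gen_def g1_def g2_def g3_def g4_def g5_def g6_def)
lemma lp3_20: "cmp (lstep 3) 5 (2, 0) = (2, 0)"
  by (simp add: cmp5 lstep_def wd_def gen_def g1_def g2_def g3_def g4_def g5_def g6_def)
lemma lp3_21: "cmp (lstep 3) 5 (2, 1) = (1, 1)"
  by (simp add: cmp5 lstep_def wd_def gen_def g1_def g2_def g3_def g4_def g5_def g6_def)
lemma lw3: "v \<in> B0 \<Longrightarrow> cmp (lstep 3) 5 v = (if v = (1, 1) then (2, 1) else if v = (2, 1) then (1, 1) else v)"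
  unfolding B0_def by (elim insertE emptyE; hypsubst; simp only: lp3_00 lp3_01 lp3_10 lp3_11 lp3_20 lp3_21; simp)

lemma lp4_00: "cmp (lstep 4) 5 (0, 0) = (0, 1)"
  by (simp add: cmp5 lstep_def wd_def gen_def g1_def g2_def g3_def g4_def g5_def g6_def)
lemma lp4_01: "cmp (lstep 4) 5 (0, 1) = (0, 0)"
  by (simp add: cmp5 lstep_def wd_def gen_def g1_def g2_def g3_def g4_def g5_def g6_def)
lemma lp4_10: "cmp (lstep 4) 5 (1, 0) = (1, 0)"
  by (simp add: cmp5 lstep_def wd_def gen_def g1_def g2_def g3_def g4_def g5_def g6_def)
lemma lp4_11: "cmp (lstep 4) 5 (1, 1) = (1, 1)"
  by (simp add: cmp5 lstep_def wd_def gen_def g1_def g2_def g3_def g4_def g5_def g6_def)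
lemma lp4_20: "cmp (lstep 4) 5 (2, 0) = (2, 0)"
  by (simp add: cmp5 lstep_def wd_def gen_def g1_def g2_def g3_def g4_def g5_def g6_def)
lemma lp4_21: "cmp (lstep 4) 5 (2, 1) = (2, 1)"
  by (simp add: cmp5 lstep_def wd_def gen_def g1_def g2_def g3_def g4_def g5_def g6_def)
lemma lw4: "v \<in> B0 \<Longrightarrow> cmp (lstep 4) 5 v = (if v = (0, 0) then (0, 1) else if v = (0, 1) then (0, 0) else v)"
  unfolding B0_def by (elim insertE emptyE; hypsubst; simp only: lp4_00 lp4_01 lp4_10 lp4_11 lp4_20 lp4_21; simp)

lemma lp5_00: "cmp (lstep 5) 5 (0, 0) = (0, 0)"
  by (simp add: cmp5 lstep_def wd_def gen_def g1_def g2_def g3_def g4_def g5_def g6_def)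
lemma lp5_01: "cmp (lstep 5) 5 (0, 1) = (0, 1)"
  by (simp add: cmp5 lstep_def wd_def gen_def g1_def g2_def g3_def g4_def g5_def g6_def)
lemma lp5_10: "cmp (lstep 5) 5 (1, 0) = (1, 1)"
  by (simp add: cmp5 lstep_def wd_def gen_def g1_def g2_def g3_def g4_def g5_def g6_def)
lemma lp5_11: "cmp (lstep 5) 5 (1, 1) = (1, 0)"
  by (simp add: cmp5 lstep_def wd_def gen_def g1_def g2_def g3_def g4_def g5_def g6_def)
lemma lp5_20: "cmp (lstep 5) 5 (2, 0) = (2, 0)"
  by (simp add: cmp5 lstep_def wd_def gen_def g1_def g2_def g3_def g4_def g5_def g6_def)
lemma lp5_21: "cmp (lstep 5) 5 (2, 1) = (2, 1)"
  by (simp add: cmp5 lstep_def wd_def gen_def g1_def g2_def g3_def g4_def g5_def g6_def)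
lemma lw5: "v \<in> B0 \<Longrightarrow> cmp (lstep 5) 5 v = (if v = (1, 0) then (1, 1) else if v = (1, 1) then (1, 0) else v)"
  unfolding B0_def by (elim insertE emptyE; hypsubst; simp only: lp5_00 lp5_01 lp5_10 lp5_11 lp5_20 lp5_21; simp)

lemma lp6_00: "cmp (lstep 6) 5 (0, 0) = (0, 0)"
  by (simp add: cmp5 lstep_def wd_def gen_def g1_def g2_def g3_def g4_def g5_def g6_def)
lemma lp6_01: "cmp (lstep 6) 5 (0, 1) = (0, 1)"
  by (simp add: cmp5 lstep_def wd_def gen_def g1_def g2_def g3_def g4_def g5_def g6_def)
lemma lp6_10: "cmp (lstep 6) 5 (1, 0) = (1, 0)"
  by (simp add: cmp5 lstep_def wd_def gen_def g1_def g2_def g3_def g4_def g5_def g6_def)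
lemma lp6_11: "cmp (lstep 6) 5 (1, 1) = (1, 1)"
  by (simp add: cmp5 lstep_def wd_def gen_def g1_def g2_def g3_def g4_def g5_def g6_def)
lemma lp6_20: "cmp (lstep 6) 5 (2, 0) = (2, 1)"
  by (simp add: cmp5 lstep_def wd_def gen_def g1_def g2_def g3_def g4_def g5_def g6_def)
lemma lp6_21: "cmp (lstep 6) 5 (2, 1) = (2, 0)"
  by (simp add: cmp5 lstep_def wd_def gen_def g1_def g2_def g3_def g4_def g5_def g6_def)
lemma lw6: "v \<in> B0 \<Longrightarrow> cmp (lstep 6) 5 v = (if v = (2, 0) then (2, 1) else if v = (2, 1) then (2, 0) else v)"
  unfolding B0_def by (elim insertE emptyE; hypsubst; simp only: lp6_00 lp6_01 lp6_10 lp6_11 lp6_20 lp6_21; simp)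

lemma loc_swap:
  assumes "d < 2" "if d = 0 then fst w \<le> 1 \<and> snd w \<le> 1 else fst w \<le> 2 \<and> snd w = 0" "v \<in> B0"
  shows "cmp (lstep (ltyp d w)) 5 v = (if v = w then addp w (dv d) else if v = addp w (dv d) then w else v)"
proof -
  obtain a b where w: "w = (a,b)" by (cases w)
  have "d = 0 \<and> w \<in> {(0,0),(1,0),(0,1),(1,1)} \<or> d = 1 \<and> w \<in> {(0,0),(1,0),(2,0)}"
    using assms(1,2) unfolding w by (auto split: if_splits)
  then have "(d = 0 \<and> w = (0, 0)) \<or> (d = 0 \<and> w = (1, 0)) \<or> (d = 0 \<and> w = (0, 1)) \<or> (d = 0 \<and> w = (1, 1)) \<or> (d = 1 \<and> w = (0, 0)) \<or> (d = 1 \<and> w = (1, 0)) \<or> (d = 1 \<and> w = (2, 0))" by blast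
  then show ?thesis
  proof (elim disjE conjE)
    assume "d = 0" "w = (0, 0)"
    then have k: "ltyp d w = 0" by (simp add: ltyp_def)
    show ?thesis unfolding k lw0[OF assms(3)] using \<open>d = 0\<close> \<open>w = (0, 0)\<close> by (simp add: addp_def dv_def)
  next
    assume "d = 0" "w = (1, 0)"
    then have k: "ltyp d w = 1" by (simp add: ltyp_def)
    show ?thesis unfolding k lw1[OF assms(3)] using \<open>d = 0\<close> \<open>w = (1, 0)\<close> by (simp add: addp_def dv_def)
  next
    assume "d = 0" "w = (0, 1)"
    then have k: "ltyp d w = 2" by (simp add: ltyp_def)
    show ?thesis unfolding k lw2[OF assms(3)] using \<open>d = 0\<close> \<open>w = (0, 1)\<close> by (simp add: addp_def dv_def)
  next
    assume "d = 0" "w = (1, 1)"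
    then have k: "ltyp d w = 3" by (simp add: ltyp_def)
    show ?thesis unfolding k lw3[OF assms(3)] using \<open>d = 0\<close> \<open>w = (1, 1)\<close> by (simp add: addp_def dv_def)
  next
    assume "d = 1" "w = (0, 0)"
    then have k: "ltyp d w = 4" by (simp add: ltyp_def)
    show ?thesis unfolding k lw4[OF assms(3)] using \<open>d = 1\<close> \<open>w = (0, 0)\<close> by (simp add: addp_def dv_def)
  next
    assume "d = 1" "w = (1, 0)"
    then have k: "ltyp d w = 5" by (simp add: ltyp_def)
    show ?thesis unfolding k lw5[OF assms(3)] using \<open>d = 1\<close> \<open>w = (1, 0)\<close> by (simp add: addp_def dv_def)
  next
    assume "d = 1" "w = (2, 0)"
    then have k: "ltyp d w = 6" by (simp add: ltyp_def)
    show ?thesis unfolding k lw6[OF assms(3)] using \<open>d = 1\<close> \<open>w = (2, 0)\<close> by (simp add: addp_def dv_def)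
  qed
qed



definition anc :: "nat \<Rightarrow> nat \<Rightarrow> vertex \<Rightarrow> vertex" where
  "anc ml ms u = (min (fst u) (ml - 2), min (snd u) (ms - 1))"
definition blk :: "nat \<Rightarrow> nat \<Rightarrow> vertex \<Rightarrow> vertex set" where
  "blk ml ms u = {fst (anc ml ms u) .. fst (anc ml ms u) + 2} \<times> {snd (anc ml ms u) .. snd (anc ml ms u) + 1}"
definition relv :: "nat \<Rightarrow> nat \<Rightarrow> vertex \<Rightarrow> vertex \<Rightarrow> nat \<times> nat" where
  "relv ml ms u v = (fst v - fst (anc ml ms u), snd v - snd (anc ml ms u))"
definition rd :: "vertex \<Rightarrow> nat \<Rightarrow> nat" where
  "rd u d = d + 2 * (fst u mod 5) + 10 * (snd u mod 3)"
definition LL :: "vertex set set \<Rightarrow> nat \<Rightarrow> vertex set" where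
  "LL E' r = {u. {u, addp u (dv (r mod 2))} \<in> E' \<and> rd u (r mod 2) = r}"
definition Sg :: "nat \<Rightarrow> nat \<Rightarrow> vertex set set \<Rightarrow> nat \<Rightarrow> nat \<Rightarrow> vertex \<Rightarrow> vertex" where
  "Sg ml ms E' r s v = (if \<exists>u\<in>LL E' r. v \<in> blk ml ms u then
     (let u = SOME u. u \<in> LL E' r \<and> v \<in> blk ml ms u in
       addp (anc ml ms u) (lstep (ltyp (r mod 2) (relv ml ms u u)) s (relv ml ms u v))) else v)"
definition St :: "nat \<Rightarrow> nat \<Rightarrow> vertex set set \<Rightarrow> nat \<Rightarrow> vertex \<Rightarrow> vertex" where
  "St ml ms E' t = Sg ml ms E' (t div 5) (t mod 5)"

lemma lstep_gen: "\<exists>n. lstep k s = gen n"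
  unfolding lstep_def by blast

lemma lcmp_B0: "w \<in> B0 \<Longrightarrow> cmp (lstep k) n w \<in> B0"
  by (induction n) (auto intro: gen_B0 simp: lstep_def)

lemma B0_iff: "w \<in> B0 \<longleftrightarrow> fst w \<le> 2 \<and> snd w \<le> 1"
proof (cases w)
  case (Pair a b)
  show ?thesis unfolding Pair B0_def
    by (auto simp: le_Suc_eq numeral_2_eq_2)
qed

lemma edge_repr:
  assumes "grid_adj ml ms a b"
  shows "\<exists>d<2. b = addp a (dv d) \<or> a = addp b (dv d)"
proof -
  obtain a1 a2 b1 b2 where ab: "a = (a1,a2)" "b = (b1,b2)" by (cases a, cases b)
  have "b1 = a1+1 \<and> b2 = a2 \<or> a1 = b1+1 \<and> a2=b2 \<or> b2=a2+1 \<and> b1=a1 \<or> a2 = b2+1 \<and> a1=b1"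
    using assms unfolding grid_adj_def ab by auto
  then show ?thesis unfolding ab addp_def dv_def
    by (elim disjE) (rule exI[of _ 0]; simp; fail | rule exI[of _ 1]; simp)+
qed

lemma edge_uniq:
  assumes "{u, addp u (dv d)} = {u', addp u' (dv d')}" "d < 2" "d' < 2"
  shows "u = u' \<and> d = d'"
proof -
  have "(u = u' \<and> addp u (dv d) = addp u' (dv d')) \<or> (u = addp u' (dv d') \<and> addp u (dv d) = u')"
    using assms(1) by (simp add: doubleton_eq_iff)
  then show ?thesis
  proof
    assume h: "u = u' \<and> addp u (dv d) = addp u' (dv d')"
    then show ?thesis using assms(2,3) by (auto simp: addp_def dv_def split: if_splits)
  next
    assume h: "u = addp u' (dv d') \<and> addp u (dv d) = u'"
    then show ?thesis using assms(2,3)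
      by (cases "d = 0"; cases "d' = 0") (auto simp: addp_def dv_def prod_eq_iff)
  qed
qed

locale gctx =
  fixes ml ms :: nat and E' :: "vertex set set"
  assumes ml3: "ml \<ge> 3" and ms2: "ms \<ge> 2" and sub: "E' \<subseteq> grid_E ml ms"
    and disj: "\<forall>e1 \<in> E'. \<forall>e2 \<in> E'. e1 \<noteq> e2 \<longrightarrow> e1 \<inter> e2 = {}"
begin

lemma edge_in: "{u, w} \<in> E' \<Longrightarrow> u \<in> grid_V ml ms \<and> w \<in> grid_V ml ms"
proof -
  assume "{u,w} \<in> E'"
  then obtain a b where "{u,w} = {a,b}" "grid_adj ml ms a b" using sub unfolding grid_E_def by blast
  then show ?thesis unfolding grid_adj_def by (auto simp: doubleton_eq_iff)
qed

lemma LL_grid: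
  assumes "u \<in> LL E' r"
  shows "u \<in> grid_V ml ms" "addp u (dv (r mod 2)) \<in> grid_V ml ms"
proof -
  have "{u, addp u (dv (r mod 2))} \<in> E'" using assms unfolding LL_def by auto
  from edge_in[OF this] show "u \<in> grid_V ml ms" "addp u (dv (r mod 2)) \<in> grid_V ml ms" by auto
qed

lemma anc_props:
  assumes "u \<in> LL E' r"
  shows "1 \<le> fst (anc ml ms u)" "fst (anc ml ms u) + 2 \<le> ml" "fst (anc ml ms u) \<le> fst u"
    "fst u \<le> fst (anc ml ms u) + 2" "r mod 2 = 0 \<Longrightarrow> fst u \<le> fst (anc ml ms u) + 1"
    "1 \<le> snd (anc ml ms u)" "snd (anc ml ms u) + 1 \<le> ms" "snd (anc ml ms u) \<le> snd u"
    "snd u \<le> snd (anc ml ms u) + 1" "r mod 2 = 1 \<Longrightarrow> snd u = snd (anc ml ms u)"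
proof -
  have g1: "u \<in> grid_V ml ms" and g2: "addp u (dv (r mod 2)) \<in> grid_V ml ms"
    using LL_grid[OF assms] by auto
  have r2: "r mod 2 = 0 \<or> r mod 2 = 1" by auto
  note defs = anc_def grid_V_def addp_def dv_def
  show "1 \<le> fst (anc ml ms u)" "fst (anc ml ms u) + 2 \<le> ml" "fst (anc ml ms u) \<le> fst u"
    "fst u \<le> fst (anc ml ms u) + 2"
    "1 \<le> snd (anc ml ms u)" "snd (anc ml ms u) + 1 \<le> ms" "snd (anc ml ms u) \<le> snd u"
    "snd u \<le> snd (anc ml ms u) + 1"
    using g1 ml3 ms2 by (auto simp: defs)
  show "r mod 2 = 0 \<Longrightarrow> fst u \<le> fst (anc ml ms u) + 1"
    using g2 ml3 by (auto simp: defs)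
  show "r mod 2 = 1 \<Longrightarrow> snd u = snd (anc ml ms u)"
    using g2 ms2 by (auto simp: defs)
qed

lemma blk_grid: "u \<in> LL E' r \<Longrightarrow> v \<in> blk ml ms u \<Longrightarrow> v \<in> grid_V ml ms"
  using anc_props[of u r] unfolding blk_def grid_V_def by auto

lemma blk_mem: "u \<in> LL E' r \<Longrightarrow> u \<in> blk ml ms u \<and> addp u (dv (r mod 2)) \<in> blk ml ms u"
  using anc_props[of u r] unfolding blk_def by (cases "r mod 2 = 0") (auto simp: addp_def dv_def mem_Times_iff)

lemma rel_valid: "u \<in> LL E' r \<Longrightarrow>
  (if r mod 2 = 0 then fst (relv ml ms u u) \<le> 1 \<and> snd (relv ml ms u u) \<le> 1
   else fst (relv ml ms u u) \<le> 2 \<and> snd (relv ml ms u u) = 0)"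
  using anc_props[of u r] unfolding relv_def by auto

lemma mod_gap: "(x::nat) mod m = y mod m \<Longrightarrow> x < y \<Longrightarrow> x + m \<le> y"
proof -
  assume h: "x mod m = y mod m" "x < y"
  then have "m dvd (y - x)" using mod_eq_dvd_iff_nat[of x y m] by auto
  then obtain k where "y - x = m * k" by blast
  moreover have "k \<noteq> 0"
  proof
    assume "k = 0"
    then have "y - x = 0" using calculation by simp
    then show False using h by simp
  qed
  ultimately show ?thesis using h by (cases k) auto
qed

lemma rd_aux: "(a1::nat) < 5 \<Longrightarrow> a2 < 5 \<Longrightarrow> b1 < 3 \<Longrightarrow> b2 < 3 \<Longrightarrow> 2*a1+10*b1 = 2*a2+10*b2 \<Longrightarrow> a1=a2 \<and> b1=b2"
proof -
  assume h: "a1 < 5" "a2 < 5" "b1 < 3" "b2 < 3" "2*a1+10*b1 = 2*a2+10*b2"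
  then have e: "a1 + 5*b1 = a2 + 5*b2" by simp
  have "(a1 + 5*b1) mod 5 = a1" "(a2 + 5*b2) mod 5 = a2" using h by simp_all
  then have "a1 = a2" using e by metis
  then show ?thesis using e by simp
qed

lemma blk_disj:
  assumes "u1 \<in> LL E' r" "u2 \<in> LL E' r" "v \<in> blk ml ms u1" "v \<in> blk ml ms u2"
  shows "u1 = u2"
proof (rule ccontr)
  assume ne: "u1 \<noteq> u2"
  have "rd u1 (r mod 2) = rd u2 (r mod 2)" using assms(1,2) unfolding LL_def by auto
  then have m5: "fst u1 mod 5 = fst u2 mod 5" and m3: "snd u1 mod 3 = snd u2 mod 3"
    using rd_aux[of "fst u1 mod 5" "fst u2 mod 5" "snd u1 mod 3" "snd u2 mod 3"] unfolding rd_def by auto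
  note A1 = anc_props[OF assms(1)] and A2 = anc_props[OF assms(2)]
  have v1: "fst v \<le> fst (anc ml ms u1) + 2" "fst (anc ml ms u1) \<le> fst v"
     "snd v \<le> snd (anc ml ms u1) + 1" "snd (anc ml ms u1) \<le> snd v"
    using assms(3) unfolding blk_def by auto
  have v2: "fst v \<le> fst (anc ml ms u2) + 2" "fst (anc ml ms u2) \<le> fst v"
     "snd v \<le> snd (anc ml ms u2) + 1" "snd (anc ml ms u2) \<le> snd v"
    using assms(4) unfolding blk_def by auto
  have "fst u1 \<noteq> fst u2 \<or> snd u1 \<noteq> snd u2" using ne by (cases u1, cases u2) auto
  then show False
  proof
    assume "fst u1 \<noteq> fst u2"
    then have "fst u1 + 5 \<le> fst u2 \<or> fst u2 + 5 \<le> fst u1"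
      using mod_gap[OF m5] mod_gap[OF m5[symmetric]] by linarith
    then show False using A1 A2 v1 v2 by linarith
  next
    assume "snd u1 \<noteq> snd u2"
    then have "snd u1 + 3 \<le> snd u2 \<or> snd u2 + 3 \<le> snd u1"
      using mod_gap[OF m3] mod_gap[OF m3[symmetric]] by linarith
    then show False using A1 A2 v1 v2 by linarith
  qed
qed

lemma relv_B0: "u \<in> LL E' r \<Longrightarrow> v \<in> blk ml ms u \<Longrightarrow>
   relv ml ms u v \<in> B0 \<and> addp (anc ml ms u) (relv ml ms u v) = v"
  unfolding blk_def relv_def B0_iff addp_def by auto

lemma addp_blk: "u \<in> LL E' r \<Longrightarrow> w \<in> B0 \<Longrightarrow>
   addp (anc ml ms u) w \<in> blk ml ms u \<and> relv ml ms u (addp (anc ml ms u) w) = w"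
  unfolding blk_def relv_def B0_iff addp_def by auto

lemma Sg_blk:
  assumes "u \<in> LL E' r" "v \<in> blk ml ms u"
  shows "Sg ml ms E' r s v = addp (anc ml ms u) (lstep (ltyp (r mod 2) (relv ml ms u u)) s (relv ml ms u v))"
proof -
  have ex: "\<exists>u\<in>LL E' r. v \<in> blk ml ms u" using assms by blast
  have "(SOME u. u \<in> LL E' r \<and> v \<in> blk ml ms u) = u"
    by (rule some_equality) (use assms blk_disj in blast)+
  then show ?thesis unfolding Sg_def using ex by simp
qed

lemma Sg_out: "(\<forall>u\<in>LL E' r. v \<notin> blk ml ms u) \<Longrightarrow> Sg ml ms E' r s v = v"
  unfolding Sg_def by auto

lemma Sg_in_blk:
  assumes "u \<in> LL E' r" "v \<in> blk ml ms u"
  shows "Sg ml ms E' r s v \<in> blk ml ms u"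
    "relv ml ms u (Sg ml ms E' r s v) = lstep (ltyp (r mod 2) (relv ml ms u u)) s (relv ml ms u v)"
proof -
  have w: "relv ml ms u v \<in> B0" using relv_B0[OF assms] by auto
  obtain n where n: "lstep (ltyp (r mod 2) (relv ml ms u u)) s = gen n" using lstep_gen by blast
  have "lstep (ltyp (r mod 2) (relv ml ms u u)) s (relv ml ms u v) \<in> B0" unfolding n using gen_B0[OF w] .
  from addp_blk[OF assms(1) this] show "Sg ml ms E' r s v \<in> blk ml ms u"
    "relv ml ms u (Sg ml ms E' r s v) = lstep (ltyp (r mod 2) (relv ml ms u u)) s (relv ml ms u v)"
    unfolding Sg_blk[OF assms] by auto
qed

lemma S1: "v \<in> grid_V ml ms \<Longrightarrow> Sg ml ms E' r s v \<in> grid_V ml ms"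
proof (cases "\<exists>u\<in>LL E' r. v \<in> blk ml ms u")
  case True
  then obtain u where "u \<in> LL E' r" "v \<in> blk ml ms u" by blast
  then show ?thesis using Sg_in_blk blk_grid by blast
next
  case False
  assume "v \<in> grid_V ml ms"
  then show ?thesis using Sg_out False by auto
qed

lemma S_blk_eq:
  assumes "u \<in> LL E' r" "a \<in> blk ml ms u" "b \<in> blk ml ms u" "relv ml ms u a = relv ml ms u b"
  shows "a = b"
  using relv_B0[OF assms(1,2)] relv_B0[OF assms(1,3)] assms(4) by metis

lemma S2: "inj_on (Sg ml ms E' r s) (grid_V ml ms)"
proof (rule inj_onI)
  fix a b assume a: "a \<in> grid_V ml ms" and b: "b \<in> grid_V ml ms" and eq: "Sg ml ms E' r s a = Sg ml ms E' r s b"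
  show "a = b"
  proof (cases "\<exists>u\<in>LL E' r. a \<in> blk ml ms u")
    case True
    then obtain u1 where u1: "u1 \<in> LL E' r" "a \<in> blk ml ms u1" by blast
    show ?thesis
    proof (cases "\<exists>u\<in>LL E' r. b \<in> blk ml ms u")
      case True
      then obtain u2 where u2: "u2 \<in> LL E' r" "b \<in> blk ml ms u2" by blast
      have "Sg ml ms E' r s a \<in> blk ml ms u1" "Sg ml ms E' r s b \<in> blk ml ms u2"
        using Sg_in_blk u1 u2 by auto
      then have "u1 = u2" using blk_disj u1 u2 eq by metis
      then have bu: "b \<in> blk ml ms u1" using u2 by simp
      obtain n where n: "lstep (ltyp (r mod 2) (relv ml ms u1 u1)) s = gen n" using lstep_gen by blast
      have "gen n (relv ml ms u1 a) = gen n (relv ml ms u1 b)"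
        using Sg_in_blk(2)[OF u1, of s] Sg_in_blk(2)[OF u1(1) bu, of s] eq n by metis
      then have "relv ml ms u1 a = relv ml ms u1 b"
        using gen_inj[of n] relv_B0[OF u1] relv_B0[OF u1(1) bu] unfolding inj_on_def by blast
      then show ?thesis using S_blk_eq u1 bu by blast
    next
      case False
      then have "Sg ml ms E' r s b = b" using Sg_out by auto
      then have "b \<in> blk ml ms u1" using Sg_in_blk(1)[OF u1, of s] eq by simp
      then show ?thesis using False u1 by blast
    qed
  next
    case False
    then have sa: "Sg ml ms E' r s a = a" using Sg_out by auto
    show ?thesis
    proof (cases "\<exists>u\<in>LL E' r. b \<in> blk ml ms u")
      case True
      then obtain u2 where u2: "u2 \<in> LL E' r" "b \<in> blk ml ms u2" by blast
      then have "a \<in> blk ml ms u2" using Sg_in_blk(1)[OF u2, of s] eq sa by simp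
      then show ?thesis using False u2 by blast
    next
      case False
      then show ?thesis using sa eq Sg_out by auto
    qed
  qed
qed

lemma S3: "v \<in> grid_V ml ms \<Longrightarrow> Sg ml ms E' r s v = v \<or> grid_adj ml ms v (Sg ml ms E' r s v)"
proof (cases "\<exists>u\<in>LL E' r. v \<in> blk ml ms u")
  case True
  then obtain u where u: "u \<in> LL E' r" "v \<in> blk ml ms u" by blast
  obtain n where n: "lstep (ltyp (r mod 2) (relv ml ms u u)) s = gen n" using lstep_gen by blast
  define w where "w = relv ml ms u v"
  have wB: "w \<in> B0" and va: "addp (anc ml ms u) w = v" using relv_B0[OF u] unfolding w_def by auto
  have sv: "Sg ml ms E' r s v = addp (anc ml ms u) (gen n w)"
    using Sg_blk[OF u] n unfolding w_def by simp
  have "gen n w = w \<or> ladj w (gen n w)" using gen_adj[OF wB] .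
  then show ?thesis
  proof
    assume "gen n w = w" then show ?thesis using sv va by simp
  next
    assume l: "ladj w (gen n w)"
    have g1: "v \<in> grid_V ml ms" using blk_grid u by blast
    have g2: "Sg ml ms E' r s v \<in> grid_V ml ms" using blk_grid Sg_in_blk(1)[OF u] u(1) by blast
    have g1': "addp (anc ml ms u) w \<in> grid_V ml ms" using g1 va by simp
    have g2': "addp (anc ml ms u) (gen n w) \<in> grid_V ml ms" using g2 sv by simp
    have "grid_adj ml ms (addp (anc ml ms u) w) (addp (anc ml ms u) (gen n w))"
      using l g1' g2' unfolding grid_adj_def ladj_def addp_def by simp
    then show ?thesis using sv va by simp
  qed
next
  case False
  then show ?thesis using Sg_out by auto
qed

lemma S4: "a \<in> grid_V ml ms \<Longrightarrow> Sg ml ms E' r s a \<noteq> a \<Longrightarrow> Sg ml ms E' r s (Sg ml ms E' r s a) \<noteq> a"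
proof (cases "\<exists>u\<in>LL E' r. a \<in> blk ml ms u")
  case True
  assume ne: "Sg ml ms E' r s a \<noteq> a"
  then obtain u where u: "u \<in> LL E' r" "a \<in> blk ml ms u" using True by blast
  obtain n where n: "lstep (ltyp (r mod 2) (relv ml ms u u)) s = gen n" using lstep_gen by blast
  have b: "Sg ml ms E' r s a \<in> blk ml ms u" using Sg_in_blk[OF u] by auto
  have r1: "relv ml ms u (Sg ml ms E' r s a) = gen n (relv ml ms u a)" using Sg_in_blk(2)[OF u] n by simp
  have r2: "relv ml ms u (Sg ml ms E' r s (Sg ml ms E' r s a)) = gen n (gen n (relv ml ms u a))"
    using Sg_in_blk(2)[OF u(1) b] n r1 by simp
  have wB: "relv ml ms u a \<in> B0" using relv_B0[OF u] by auto
  have "gen n (relv ml ms u a) \<noteq> relv ml ms u a"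
    using ne r1 S_blk_eq[OF u(1) b u(2)] by metis
  then have "gen n (gen n (relv ml ms u a)) \<noteq> relv ml ms u a" using gen_noswap[OF wB] by blast
  then show ?thesis using r2 by metis
next
  case False
  then show "Sg ml ms E' r s a \<noteq> a \<Longrightarrow> ?thesis" using Sg_out by auto
qed

lemma vm:
  assumes "inj_on p (grid_V ml ms)" "p ` grid_V ml ms \<subseteq> grid_V ml ms"
  shows "valid_move ml ms p (Sg ml ms E' r s \<circ> p)"
  unfolding valid_move_def
proof (intro conjI ballI impI)
  fix x assume "x \<in> grid_V ml ms"
  then have "p x \<in> grid_V ml ms" using assms(2) by blast
  then show "(Sg ml ms E' r s \<circ> p) x = p x \<or> grid_adj ml ms (p x) ((Sg ml ms E' r s \<circ> p) x)"
    using S3 by simp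
next
  show "inj_on (Sg ml ms E' r s \<circ> p) (grid_V ml ms)"
    using comp_inj_on[OF assms(1) inj_on_subset[OF S2 assms(2)]] .
next
  fix r1 r2 assume r1: "r1 \<in> grid_V ml ms" and r2: "r2 \<in> grid_V ml ms" and "r1 \<noteq> r2"
  show "\<not> (p r1 \<noteq> (Sg ml ms E' r s \<circ> p) r1 \<and> (Sg ml ms E' r s \<circ> p) r1 = p r2 \<and> (Sg ml ms E' r s \<circ> p) r2 = p r1)"
  proof
    assume h: "p r1 \<noteq> (Sg ml ms E' r s \<circ> p) r1 \<and> (Sg ml ms E' r s \<circ> p) r1 = p r2 \<and> (Sg ml ms E' r s \<circ> p) r2 = p r1"
    have "p r1 \<in> grid_V ml ms" using assms(2) r1 by blast
    then show False using S4[of "p r1" r s] h by auto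
  qed
qed

lemma cmp_blk:
  assumes "u \<in> LL E' r" "v \<in> blk ml ms u"
  shows "cmp (Sg ml ms E' r) n v = addp (anc ml ms u) (cmp (lstep (ltyp (r mod 2) (relv ml ms u u))) n (relv ml ms u v))"
proof (induction n)
  case 0
  then show ?case using relv_B0[OF assms] by simp
next
  case (Suc n)
  define w where "w = cmp (lstep (ltyp (r mod 2) (relv ml ms u u))) n (relv ml ms u v)"
  have wB: "w \<in> B0" unfolding w_def using lcmp_B0 relv_B0[OF assms] by blast
  note ab = addp_blk[OF assms(1) wB]
  show ?case using Suc Sg_blk[OF assms(1) ab[THEN conjunct1], of n] ab unfolding w_def by simp
qed

lemma cmp_out: "(\<forall>u\<in>LL E' r. v \<notin> blk ml ms u) \<Longrightarrow> cmp (Sg ml ms E' r) n v = v"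
  by (induction n) (auto simp: Sg_out)

lemma R_gen:
  assumes u: "u \<in> LL E' r" and v: "v \<in> blk ml ms u"
  shows "cmp (Sg ml ms E' r) 5 v = addp (anc ml ms u)
     (if relv ml ms u v = relv ml ms u u then addp (relv ml ms u u) (dv (r mod 2))
      else if relv ml ms u v = addp (relv ml ms u u) (dv (r mod 2)) then relv ml ms u u else relv ml ms u v)"
  unfolding cmp_blk[OF u v]
  by (rule arg_cong[where f = "addp (anc ml ms u)"], rule loc_swap)
     (use rel_valid[OF u] relv_B0[OF u v] in auto)

lemma relv_w: "u \<in> LL E' r \<Longrightarrow> relv ml ms u (addp u (dv (r mod 2))) = addp (relv ml ms u u) (dv (r mod 2))"
  using anc_props[of u r] unfolding relv_def addp_def dv_def by auto

lemma R1: "u \<in> LL E' r \<Longrightarrow> cmp (Sg ml ms E' r) 5 u = addp u (dv (r mod 2))"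
  using R_gen[of u r u] blk_mem[of u r] anc_props[of u r]
  unfolding relv_def addp_def by (auto simp: dv_def)

lemma R2: "u \<in> LL E' r \<Longrightarrow> cmp (Sg ml ms E' r) 5 (addp u (dv (r mod 2))) = u"
proof -
  assume u: "u \<in> LL E' r"
  have ne: "addp (relv ml ms u u) (dv (r mod 2)) \<noteq> relv ml ms u u"
    by (auto simp: addp_def dv_def prod_eq_iff)
  have "cmp (Sg ml ms E' r) 5 (addp u (dv (r mod 2))) = addp (anc ml ms u) (relv ml ms u u)"
    using R_gen[OF u, of "addp u (dv (r mod 2))"] blk_mem[OF u] relv_w[OF u] ne by auto
  also have "\<dots> = u" using relv_B0[OF u] blk_mem[OF u] by auto
  finally show ?thesis .
qed

lemma R3:
  assumes "\<forall>u\<in>LL E' r. v \<noteq> u \<and> v \<noteq> addp u (dv (r mod 2))"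
  shows "cmp (Sg ml ms E' r) 5 v = v"
proof (cases "\<exists>u\<in>LL E' r. v \<in> blk ml ms u")
  case True
  then obtain u where u: "u \<in> LL E' r" "v \<in> blk ml ms u" by blast
  have bm: "u \<in> blk ml ms u" "addp u (dv (r mod 2)) \<in> blk ml ms u" using blk_mem[OF u(1)] by auto
  have n1: "relv ml ms u v \<noteq> relv ml ms u u"
    using S_blk_eq[OF u(1) u(2) bm(1)] assms u(1) by blast
  have n2: "relv ml ms u v \<noteq> addp (relv ml ms u u) (dv (r mod 2))"
    using S_blk_eq[OF u(1) u(2) bm(2)] assms u(1) relv_w[OF u(1)] by metis
  show ?thesis using R_gen[OF u] n1 n2 relv_B0[OF u] by simp
next
  case False
  then show ?thesis using cmp_out by auto
qed

lemma cmp_add: "cmp f (m + n) v = cmp (\<lambda>i. f (m + i)) n (cmp f m v)"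
  by (induction n) auto

lemma cmp_cong: "(\<And>i. i < n \<Longrightarrow> f i = g i) \<Longrightarrow> cmp f n v = cmp g n v"
  by (induction n) auto

lemma seq_round: "cmp (St ml ms E') (5 * Suc r) v = cmp (Sg ml ms E' r) 5 (cmp (St ml ms E') (5 * r) v)"
proof -
  have "cmp (St ml ms E') (5 * r + 5) v = cmp (\<lambda>i. St ml ms E' (5 * r + i)) 5 (cmp (St ml ms E') (5 * r) v)"
    by (rule cmp_add)
  also have "\<dots> = cmp (Sg ml ms E' r) 5 (cmp (St ml ms E') (5 * r) v)"
    by (rule cmp_cong) (simp add: St_def)
  finally have "cmp (St ml ms E') (5 * r + 5) v = cmp (Sg ml ms E' r) 5 (cmp (St ml ms E') (5 * r) v)" .
  moreover have "5 * Suc r = 5 * r + 5" by simp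
  ultimately show ?thesis by metis
qed

lemma rd_lt: "d < 2 \<Longrightarrow> rd u d < 30"
proof -
  assume "d < 2"
  moreover have "fst u mod 5 < 5" "snd u mod 3 < 3" by auto
  ultimately show ?thesis unfolding rd_def by linarith
qed

lemma rd_mod: "d < 2 \<Longrightarrow> rd u d mod 2 = d"
proof -
  assume "d < 2"
  have "rd u d = d + 2 * (fst u mod 5 + 5 * (snd u mod 3))" unfolding rd_def by simp
  moreover have "(d + 2 * (K::nat)) mod 2 = d" for K using \<open>d < 2\<close> by simp
  ultimately show ?thesis by metis
qed

end


context gctx begin

lemma notdes:
  assumes e: "{u, addp u (dv d)} \<in> E'" and d: "d < 2" and ne: "rd u d \<noteq> r"
    and x: "x = u \<or> x = addp u (dv d)"
  shows "\<forall>u'\<in>LL E' r. x \<noteq> u' \<and> x \<noteq> addp u' (dv (r mod 2))"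
proof (intro ballI)
  fix u' assume u': "u' \<in> LL E' r"
  have e': "{u', addp u' (dv (r mod 2))} \<in> E'" and rr: "rd u' (r mod 2) = r" using u' unfolding LL_def by auto
  show "x \<noteq> u' \<and> x \<noteq> addp u' (dv (r mod 2))"
  proof (rule ccontr)
    assume h: "\<not> (x \<noteq> u' \<and> x \<noteq> addp u' (dv (r mod 2)))"
    have xa: "x \<in> {u, addp u (dv d)}" using x by blast
    have xb: "x \<in> {u', addp u' (dv (r mod 2))}" using h by blast
    have "{u, addp u (dv d)} = {u', addp u' (dv (r mod 2))}"
    proof (rule ccontr)
      assume ne: "{u, addp u (dv d)} \<noteq> {u', addp u' (dv (r mod 2))}"
      have "{u, addp u (dv d)} \<inter> {u', addp u' (dv (r mod 2))} = {}" using disj e e' ne by simp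
      then show False using xa xb by blast
    qed
    from edge_uniq[OF this d] have "u = u' \<and> d = r mod 2" by simp
    then show False using ne rr by simp
  qed
qed

lemma notin_des:
  assumes "v \<notin> \<Union>E'"
  shows "\<forall>u'\<in>LL E' r. v \<noteq> u' \<and> v \<noteq> addp u' (dv (r mod 2))"
  using assms unfolding LL_def by blast

lemma inv:
  "r \<le> 30 \<Longrightarrow> (\<forall>u d. d < 2 \<longrightarrow> {u, addp u (dv d)} \<in> E' \<longrightarrow>
      cmp (St ml ms E') (5 * r) u = (if rd u d < r then addp u (dv d) else u) \<and>
      cmp (St ml ms E') (5 * r) (addp u (dv d)) = (if rd u d < r then u else addp u (dv d))) \<and>
    (\<forall>v. v \<notin> \<Union>E' \<longrightarrow> cmp (St ml ms E') (5 * r) v = v)"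
proof (induction r)
  case 0
  then show ?case by simp
next
  case (Suc r)
  then have IH: "(\<forall>u d. d < 2 \<longrightarrow> {u, addp u (dv d)} \<in> E' \<longrightarrow>
      cmp (St ml ms E') (5 * r) u = (if rd u d < r then addp u (dv d) else u) \<and>
      cmp (St ml ms E') (5 * r) (addp u (dv d)) = (if rd u d < r then u else addp u (dv d)))"
    "\<forall>v. v \<notin> \<Union>E' \<longrightarrow> cmp (St ml ms E') (5 * r) v = v" by auto
  show ?case
  proof (rule conjI)
    show "\<forall>v. v \<notin> \<Union>E' \<longrightarrow> cmp (St ml ms E') (5 * Suc r) v = v"
    proof (intro allI impI)
      fix v assume v: "v \<notin> \<Union>E'"
      have "cmp (St ml ms E') (5 * r) v = v" using IH(2) v by blast
      then show "cmp (St ml ms E') (5 * Suc r) v = v" unfolding seq_round using R3[OF notin_des[OF v]] by simp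
    qed
  next
    show "\<forall>u d. d < 2 \<longrightarrow> {u, addp u (dv d)} \<in> E' \<longrightarrow>
      cmp (St ml ms E') (5 * Suc r) u = (if rd u d < Suc r then addp u (dv d) else u) \<and>
      cmp (St ml ms E') (5 * Suc r) (addp u (dv d)) = (if rd u d < Suc r then u else addp u (dv d))"
    proof (intro allI impI)
      fix u d assume d: "d < 2" and e: "{u, addp u (dv d)} \<in> E'"
      note I = IH(1)[rule_format, OF d e]
      show "cmp (St ml ms E') (5 * Suc r) u = (if rd u d < Suc r then addp u (dv d) else u) \<and>
        cmp (St ml ms E') (5 * Suc r) (addp u (dv d)) = (if rd u d < Suc r then u else addp u (dv d))"
      proof (cases "rd u d = r")
        case True
        then have dm: "r mod 2 = d" using rd_mod[of d u, OF d] by simp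
        have uL: "u \<in> LL E' r" unfolding LL_def using e True dm by simp
        show ?thesis unfolding seq_round using I True R1[OF uL] R2[OF uL] dm by simp
      next
        case False
        have f1: "cmp (Sg ml ms E' r) 5 u = u" using R3[OF notdes[OF e d False]] by simp
        have f2: "cmp (Sg ml ms E' r) 5 (addp u (dv d)) = addp u (dv d)" using R3[OF notdes[OF e d False]] by simp
        show ?thesis unfolding seq_round using I False f1 f2 by auto
      qed
    qed
  qed
qed

lemma seq_ok: "inj_on (cmp (St ml ms E') t) (grid_V ml ms) \<and> cmp (St ml ms E') t ` grid_V ml ms \<subseteq> grid_V ml ms"
proof (induction t)
  case 0
  then show ?case by simp
next
  case (Suc t)
  have i1: "inj_on (St ml ms E' t) (grid_V ml ms)" unfolding St_def by (rule S2)
  have i2: "\<And>v. v \<in> grid_V ml ms \<Longrightarrow> St ml ms E' t v \<in> grid_V ml ms" unfolding St_def by (rule S1)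
  have c: "cmp (St ml ms E') (Suc t) = St ml ms E' t \<circ> cmp (St ml ms E') t" by simp
  have "inj_on (St ml ms E' t \<circ> cmp (St ml ms E') t) (grid_V ml ms)"
    using comp_inj_on[OF conjunct1[OF Suc] inj_on_subset[OF i1 conjunct2[OF Suc]]] .
  moreover have "(St ml ms E' t \<circ> cmp (St ml ms E') t) ` grid_V ml ms \<subseteq> grid_V ml ms"
    using Suc i2 by (auto simp: image_subset_iff)
  ultimately show ?case unfolding c by blast
qed

lemma main:
  "\<exists>(T::nat) (seq::nat \<Rightarrow> vertex \<Rightarrow> vertex).
        T \<le> 150 \<and>
        (\<forall>v \<in> grid_V ml ms. seq 0 v = v) \<and>
        (\<forall>t < T. valid_move ml ms (seq t) (seq (Suc t))) \<and>
        (\<forall>v1 v2. {v1, v2} \<in> E' \<longrightarrow> seq T v1 = v2) \<and>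
        (\<forall>v \<in> grid_V ml ms. v \<notin> \<Union>E' \<longrightarrow> seq T v = v)"
proof (intro exI conjI)
  let ?s = "cmp (St ml ms E')"
  show "(150::nat) \<le> 150" by simp
  show "\<forall>v \<in> grid_V ml ms. ?s 0 v = v" by simp
  show "\<forall>t < 150. valid_move ml ms (?s t) (?s (Suc t))"
  proof (intro allI impI)
    fix t :: nat
    have "?s (Suc t) = Sg ml ms E' (t div 5) (t mod 5) \<circ> ?s t" by (simp add: St_def)
    then show "valid_move ml ms (?s t) (?s (Suc t))" using vm seq_ok[of t] by simp
  qed
  have I30: "\<forall>u d. d < 2 \<longrightarrow> {u, addp u (dv d)} \<in> E' \<longrightarrow>
      ?s 150 u = addp u (dv d) \<and> ?s 150 (addp u (dv d)) = u"
    "\<forall>v. v \<notin> \<Union>E' \<longrightarrow> ?s 150 v = v" using inv[of 30] rd_lt by auto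
  show "\<forall>v \<in> grid_V ml ms. v \<notin> \<Union>E' \<longrightarrow> ?s 150 v = v" using I30(2) by blast
  show "\<forall>v1 v2. {v1, v2} \<in> E' \<longrightarrow> ?s 150 v1 = v2"
  proof (intro allI impI)
    fix v1 v2 assume e: "{v1, v2} \<in> E'"
    then obtain a b where ab: "{v1,v2} = {a,b}" "grid_adj ml ms a b" using sub unfolding grid_E_def by blast
    obtain d where d: "d < 2" "b = addp a (dv d) \<or> a = addp b (dv d)" using edge_repr[OF ab(2)] by blast
    obtain u where u: "{v1, v2} = {u, addp u (dv d)}"
      using d(2) ab(1) by (metis insert_commute)
    have ne: "addp u (dv d) \<noteq> u" by (auto simp: addp_def dv_def prod_eq_iff)
    have "v1 = u \<and> v2 = addp u (dv d) \<or> v1 = addp u (dv d) \<and> v2 = u"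
      using u ne by (auto simp: doubleton_eq_iff)
    have eu: "{u, addp u (dv d)} \<in> E'" using e u by simp
    note h = I30(1)[rule_format, OF d(1) eu]
    show "?s 150 v1 = v2" using \<open>v1 = u \<and> v2 = addp u (dv d) \<or> v1 = addp u (dv d) \<and> v2 = u\<close> h by auto
  qed
qed

end

theorem lemma2:
  shows "\<exists>C::nat. \<forall>ml ms::nat. \<forall>E'::vertex set set.
     ml \<ge> ms \<longrightarrow> ml \<ge> 3 \<longrightarrow> ms \<ge> 2 \<longrightarrow>
     E' \<subseteq> grid_E ml ms \<longrightarrow>
     (\<forall>e1 \<in> E'. \<forall>e2 \<in> E'. e1 \<noteq> e2 \<longrightarrow> e1 \<inter> e2 = {}) \<longrightarrow>
     (\<exists>(T::nat) (seq::nat \<Rightarrow> vertex \<Rightarrow> vertex).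
        T \<le> C \<and>
        (\<forall>v \<in> grid_V ml ms. seq 0 v = v) \<and>
        (\<forall>t < T. valid_move ml ms (seq t) (seq (Suc t))) \<and>
        (\<forall>v1 v2. {v1, v2} \<in> E' \<longrightarrow> seq T v1 = v2) \<and>
        (\<forall>v \<in> grid_V ml ms. v \<notin> \<Union>E' \<longrightarrow> seq T v = v))"
proof (rule exI[of _ 150], intro allI impI)
  fix ml ms :: nat and E' :: "vertex set set"
  assume a: "ms \<le> ml" "3 \<le> ml" "2 \<le> ms" "E' \<subseteq> grid_E ml ms"
    "\<forall>e1 \<in> E'. \<forall>e2 \<in> E'. e1 \<noteq> e2 \<longrightarrow> e1 \<inter> e2 = {}"
  interpret gctx ml ms E' using a by unfold_locales auto
  show "\<exists>(T::nat) (seq::nat \<Rightarrow> vertex \<Rightarrow> vertex).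
        T \<le> 150 \<and>
        (\<forall>v \<in> grid_V ml ms. seq 0 v = v) \<and>
        (\<forall>t < T. valid_move ml ms (seq t) (seq (Suc t))) \<and>
        (\<forall>v1 v2. {v1, v2} \<in> E' \<longrightarrow> seq T v1 = v2) \<and>
        (\<forall>v \<in> grid_V ml ms. v \<notin> \<Union>E' \<longrightarrow> seq T v = v)" by (rule main)
qed

end
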